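(* Let $\gamma\ge 2$ be an integer, $\delta>0$, and let $\mu$ range over an arbitrary parameter set. Let $F(\rho,\mu)$ be complex valued and, for each $\mu$, smooth in $\rho\in[0,\delta)$; set $a_j(\mu)=\partial_\rho^jF(0,\mu)/j!$. Assume (F1) $a_0(\mu)=a_1(\mu)=0$ for all $\mu$; (F2) there is $C>0$ with $\sum_{j=2}^{\gamma}|a_j(\mu)|\ge C$ for all $\mu$; (F3) for each $\mu$, $|\partial_\rho F(\rho,\mu)|$ is increasing in $\rho$ for $0<\rho<\delta$; (F4') for every $k\in\mathbb{N}$, $\partial_\rho^kF(\rho,\mu)$ is bounded uniformly in $0<\rho<\delta$ and $\mu$. Then, provided $\delta$ is sufficiently small, there exist constants $C>0$ and $C_m>0$ ($m\in\mathbb{N}$) such that for all $0<\rho<\delta$, all $\mu$ and all $m\in\mathbb{N}$, $$|\partial_\rho F(\rho,\mu)|\ge C\rho^{\gamma-1}\qquad\text{and}\qquad |\partial_\rho^mF(\rho,\mu)|\le C_m\rho^{1-m}|\partial_\rho F(\rho,\mu)|.$$ *)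

theory Defs
  imports "HOL-Analysis.Analysis"
begin

end

theory Submission
  imports Defs
begin


lemma mvt_c:
  fixes f f' :: "real \<Rightarrow> complex"
  assumes "convex S" "\<And>x. x\<in>S \<Longrightarrow> (f has_vector_derivative f' x) (at x within S)"
    "\<And>x. x\<in>S \<Longrightarrow> norm (f' x) \<le> B" "x\<in>S" "y\<in>S"
  shows "norm (f x - f y) \<le> B * \<bar>x - y\<bar>"
proof -
  have "norm (f x - f y) \<le> B * norm (x - y)"
  proof (rule differentiable_bound[of S f "\<lambda>x h. h *\<^sub>R f' x" B x y])
    show "convex S" by fact
    show "(f has_derivative (\<lambda>h. h *\<^sub>R f' x)) (at x within S)" if "x\<in>S" for x
      using assms(2)[OF that] by (simp add: has_vector_derivative_def)
    show "onorm (\<lambda>h. h *\<^sub>R f' x) \<le> B" if "x\<in>S" for x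
      by (rule onorm_le) (use assms(3)[OF that] in \<open>auto simp: mult.commute[of B] intro!: mult_left_mono\<close>)
  qed (use assms in auto)
  thus ?thesis by simp
qed

lemma step2:
  fixes h0 h1 h2 :: "real \<Rightarrow> complex"
  assumes s: "0 < s" "2 * s \<le> r"
    and d0: "\<And>x. x\<in>{0..r} \<Longrightarrow> (h0 has_vector_derivative h1 x) (at x within {0..r})"
    and d1: "\<And>x. x\<in>{0..r} \<Longrightarrow> (h1 has_vector_derivative h2 x) (at x within {0..r})"
    and b0: "\<And>x. x\<in>{0..r} \<Longrightarrow> norm (h0 x) \<le> M0"
    and b2: "\<And>x. x\<in>{0..r} \<Longrightarrow> norm (h2 x) \<le> M2"
    and x: "x \<in> {0..r}"
  shows "norm (h1 x) \<le> 2*M0/s + s*M2"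
proof -
  define y where "y = (if x \<le> r/2 then x + s else x - s)"
  have y: "y \<in> {0..r}" and yx: "\<bar>y - x\<bar> = s" using x s by (auto simp: y_def)
  define S where "S = closed_segment x y"
  have SS: "S \<subseteq> {0..r}" using x y by (auto simp: S_def closed_segment_eq_real_ivl)
  have zx: "\<bar>z - x\<bar> \<le> s" if "z \<in> S" for z
    using that yx by (auto simp: S_def closed_segment_eq_real_ivl split: if_splits)
  have M2: "0 \<le> M2" using b2[of 0] s by (auto intro: order_trans[OF norm_ge_zero])
  have "norm (h0 y - h0 x - (y - x) *\<^sub>R h1 x) \<le> norm (y - x) * (s*M2)"
  proof (rule vector_differentiable_bound_linearization[of S h0 h1 x y x])
    show "(h0 has_vector_derivative h1 z) (at z within S)" if "z \<in> S" for z
      using has_vector_derivative_within_subset[OF d0 SS] that SS by auto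
    show "closed_segment x y \<subseteq> S" by (simp add: S_def)
    show "x \<in> S" by (simp add: S_def)
    show "norm (h1 z - h1 x) \<le> s * M2" if "z \<in> S" for z
    proof -
      have "norm (h1 z - h1 x) \<le> M2 * \<bar>z - x\<bar>"
        apply (rule mvt_c[of S h1 h2])
        using has_vector_derivative_within_subset[OF d1 SS] SS that b2
        by (auto simp: S_def)
      also have "\<dots> \<le> M2 * s" using zx[OF that] M2 by (intro mult_left_mono) auto
      finally show ?thesis by (simp add: mult.commute)
    qed
  qed
  hence R: "norm (h0 y - h0 x - (y - x) *\<^sub>R h1 x) \<le> s * s * M2" using yx by simp
  have "s * norm (h1 x) = norm ((y - x) *\<^sub>R h1 x)" using yx by simp
  also have "\<dots> \<le> norm (h0 y) + norm (h0 x) + norm (h0 y - h0 x - (y - x) *\<^sub>R h1 x)"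
  proof -
    have e: "(y-x) *\<^sub>R h1 x = (h0 y - h0 x) - (h0 y - h0 x - (y - x) *\<^sub>R h1 x)" by simp
    show ?thesis
      using norm_triangle_ineq4[of "h0 y - h0 x" "h0 y - h0 x - (y - x) *\<^sub>R h1 x"] norm_triangle_ineq4[of "h0 y" "h0 x"]
      by (subst e) linarith
  qed
  also have "\<dots> \<le> M0 + M0 + s* s*M2" using b0[OF x] b0[OF y] R by linarith
  finally have "s * norm (h1 x) \<le> 2*M0 + s* s*M2" by simp
  hence "norm (h1 x) \<le> (2*M0 + s* s*M2)/s" using s by (simp add: field_simps)
  thus ?thesis using s by (simp add: field_simps)
qed


definition hypI :: "real \<Rightarrow> real \<Rightarrow> (nat \<Rightarrow> real) \<Rightarrow> bool" where
  "hypI a L S \<longleftrightarrow> (\<forall>j s. 1 \<le> j \<longrightarrow> 0 < s \<longrightarrow> s \<le> L \<longrightarrow> S j \<le> a * (S (j-1) / s + s * S (Suc j)))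
      \<and> (\<forall>j. 0 \<le> S j)"

lemma hypI_shift: "hypI a L S \<Longrightarrow> hypI a L (\<lambda>i. S (Suc i))"
  unfolding hypI_def
proof (intro conjI allI impI)
  fix j :: nat and s :: real
  assume h: "(\<forall>j s. 1 \<le> j \<longrightarrow> 0 < s \<longrightarrow> s \<le> L \<longrightarrow> S j \<le> a * (S (j-1) / s + s * S (Suc j))) \<and> (\<forall>j. 0 \<le> S j)"
    and "1 \<le> j" "0 < s" "s \<le> L"
  then show "S (Suc j) \<le> a * (S (Suc (j - 1)) / s + s * S (Suc (Suc j)))"
    using h[THEN conjunct1, rule_format, of "Suc j" s] by simp
qed auto

lemma interp:
  assumes a: "a \<ge> 1"
  shows "\<forall>j\<le>N. \<exists>K>0. \<forall>S L s. hypI a L S \<longrightarrow> 0 < s \<longrightarrow> s \<le> L \<longrightarrow>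
            S j \<le> K * (S 0 / s^j + s^(N-j) * S N)"
proof (induction N)
  case 0
  show ?case
  proof (intro allI impI)
    fix j :: nat assume "j \<le> 0"
    then show "\<exists>K>0. \<forall>S L s. hypI a L S \<longrightarrow> 0 < s \<longrightarrow> s \<le> L \<longrightarrow> S j \<le> K * (S 0 / s^j + s^(0-j) * S 0)"
      by (intro exI[of _ 1]) (auto simp: hypI_def)
  qed
next
  case (Suc N)
  note IH = Suc.IH
  have one: "\<exists>K>0. \<forall>S L s. hypI a L S \<longrightarrow> 0 < s \<longrightarrow> s \<le> L \<longrightarrow>
            S 1 \<le> K * (S 0 / s + s^N * S (Suc N))" if N1: "N \<ge> 1"
  proof (cases "N = 1")
    case True
    show ?thesis
    proof (intro exI[of _ a] conjI allI impI)
      fix S L s assume "hypI a L S" "0 < s" "s \<le> L"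
      then show "S 1 \<le> a * (S 0 / s + s ^ N * S (Suc N))"
        using True unfolding hypI_def by auto
    qed (use a in auto)
  next
    case False
    hence N2: "N \<ge> 2" using N1 by auto
    obtain K1 where K1: "K1 > 0" and K1b: "\<And>S L s. hypI a L S \<Longrightarrow> 0 < s \<Longrightarrow> s \<le> L \<Longrightarrow>
            S 1 \<le> K1 * (S 0 / s^1 + s^(N-1) * S N)"
      using IH N1 by blast
    obtain K2 where K2: "K2 > 0" and K2b: "\<And>S L s. hypI a L S \<Longrightarrow> 0 < s \<Longrightarrow> s \<le> L \<Longrightarrow>
            S (N-1) \<le> K2 * (S 0 / s^(N-1) + s^(N-(N-1)) * S N)"
      using IH[rule_format, of "N-1"] by auto
    define c where "c = 2*K1*K2 + 1"
    have c1: "c \<ge> 1" and cpos: "c > 0" using mult_pos_pos[OF K1 K2] by (auto simp: c_def)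
    show ?thesis
    proof (intro exI[of _ "2*K1*c + 2*K1*K2"] conjI allI impI)
      show "2*K1*c + 2*K1*K2 > 0" using mult_pos_pos[OF K1 K2] mult_pos_pos[OF K1 cpos] by simp
      fix S L s assume hS: "hypI a L S" and s: "0 < s" "s \<le> L"
      define s0 where "s0 = s / c"
      have "s * 1 \<le> s * c" using s c1 by (intro mult_left_mono) auto
      hence s0s: "s0 \<le> s" using s c1 cpos by (auto simp: s0_def divide_le_eq)
      have s0: "0 < s0" "s0 \<le> s" "s0 \<le> L" using s cpos s0s by (auto simp: s0_def)
      have nn: "\<And>j. 0 \<le> S j" using hS by (auto simp: hypI_def)
      have A: "S 1 \<le> K1 * (S 0 / s0 + s0^(N-1) * S N)" using K1b[OF hS s0(1) s0(3)] by simp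
      have B: "S N \<le> K2 * (S 1 / s^(N-1) + s * S (Suc N))"
        using K2b[OF hypI_shift[OF hS] s] N2 by (simp add: Suc_diff_1)
      have pw: "s0^(N-1) = s^(N-1) / c^(N-1)" by (simp add: s0_def power_divide)
      have cN: "c^(N-1) \<ge> c" using power_increasing[of 1 "N-1" c] c1 N2 by simp
      have "S 1 \<le> K1 * S 0 / s0 + K1 * s0^(N-1) * S N" using A by (simp add: algebra_simps)
      also have "K1 * s0^(N-1) * S N \<le> K1 * s0^(N-1) * (K2 * (S 1 / s^(N-1) + s * S (Suc N)))"
        using B K1 s0 by (intro mult_left_mono) auto
      also have "\<dots> = K1 * K2 * (s0^(N-1) / s^(N-1)) * S 1 + K1 * K2 * s0^(N-1) * s * S (Suc N)"
        by (simp add: algebra_simps)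
      also have "s0^(N-1) / s^(N-1) = 1 / c^(N-1)" using s cpos by (simp add: s0_def power_divide)
      finally have C: "S 1 \<le> K1 * S 0 / s0 + K1 * K2 / c^(N-1) * S 1 + K1 * K2 * s0^(N-1) * s * S (Suc N)"
        by simp
      have "K1 * K2 / c^(N-1) \<le> K1 * K2 / c"
        using cN cpos K1 K2 by (intro divide_left_mono) auto
      also have "K1 * K2 / c \<le> 1/2" using K1 K2 cpos by (simp add: c_def field_simps)
      finally have "K1 * K2 / c^(N-1) * S 1 \<le> 1/2 * S 1" using nn by (intro mult_right_mono) auto
      with C have D: "S 1 \<le> 2 * (K1 * S 0 / s0) + 2 * (K1 * K2 * s0^(N-1) * s * S (Suc N))" by linarith
      have E1: "K1 * S 0 / s0 = K1 * c * (S 0 / s)" using cpos s by (simp add: s0_def field_simps)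
      have "s0^(N-1) * s \<le> s^(N-1) * s" using s0 s by (intro mult_right_mono power_mono) auto
      also have "s^(N-1) * s = s^N" using N2 by (subst power_Suc2[symmetric]) simp
      finally have sN: "s0^(N-1) * s \<le> s^N" .
      have E2: "K1 * K2 * s0^(N-1) * s * S (Suc N) \<le> K1 * K2 * (s^N * S (Suc N))"
      proof -
        have "0 \<le> K1 * K2" using K1 K2 by simp
        hence "K1 * K2 * (s0^(N-1) * s * S (Suc N)) \<le> K1 * K2 * (s^N * S (Suc N))"
          using sN nn by (intro mult_left_mono mult_right_mono) auto
        thus ?thesis by (simp add: mult.assoc)
      qed
      have "S 1 \<le> 2 * (K1 * c * (S 0 / s)) + 2 * (K1 * K2 * (s^N * S (Suc N)))" using D E1 E2 by linarith
      also have "\<dots> \<le> (2*K1*c + 2*K1*K2) * (S 0 / s + s^N * S (Suc N))"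
        using K1 K2 cpos nn s by (simp add: algebra_simps)
      finally show "S 1 \<le> (2*K1*c + 2*K1*K2) * (S 0 / s + s^N * S (Suc N))" .
    qed
  qed
  show ?case
  proof (intro allI impI)
    fix j assume j: "j \<le> Suc N"
    show "\<exists>K>0. \<forall>S L s. hypI a L S \<longrightarrow> 0 < s \<longrightarrow> s \<le> L \<longrightarrow>
            S j \<le> K * (S 0 / s^j + s^(Suc N-j) * S (Suc N))"
    proof (cases "j = 0")
      case True
      show ?thesis by (intro exI[of _ 1]) (auto simp: True hypI_def)
    next
      case j0: False
      show ?thesis
      proof (cases "j = Suc N")
        case True
        show ?thesis by (intro exI[of _ 1]) (auto simp: True hypI_def)
      next
        case False
        hence jN: "1 \<le> j" "j \<le> N" using j j0 by auto
        obtain K where K: "K>0" and Kb: "\<And>S L s. hypI a L S \<Longrightarrow> 0 < s \<Longrightarrow> s \<le> L \<Longrightarrow>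
            S 1 \<le> K * (S 0 / s + s^N * S (Suc N))" using one jN by auto
        obtain K3 where K3: "K3>0" and K3b: "\<And>S L s. hypI a L S \<Longrightarrow> 0 < s \<Longrightarrow> s \<le> L \<Longrightarrow>
            S (j-1) \<le> K3 * (S 0 / s^(j-1) + s^(N-(j-1)) * S N)"
          using IH[rule_format, of "j-1"] jN by (metis diff_le_self le_trans)
        show ?thesis
        proof (intro exI[of _ "K3 * (K + 1)"] conjI allI impI)
          show "K3 * (K + 1) > 0" using K K3 by auto
          fix S L s assume hS: "hypI a L S" and s: "0 < s" "s \<le> L"
          have nn: "\<And>j. 0 \<le> S j" using hS by (auto simp: hypI_def)
          have B: "S j \<le> K3 * (S 1 / s^(j-1) + s^(Suc N - j) * S (Suc N))"
            using K3b[OF hypI_shift[OF hS] s] jN by (simp add: Suc_diff_le)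
          have "S 1 / s^(j-1) \<le> K * (S 0 / s + s^N * S (Suc N)) / s^(j-1)"
            using Kb[OF hS s] s by (intro divide_right_mono) auto
          also have "\<dots> = K * (S 0 / s^j + s^(Suc N - j) * S (Suc N))"
          proof -
            have "s * s^(j-1) = s^j" using jN by (subst power_Suc[symmetric]) simp
            moreover have "s^N = s^(Suc N - j) * s^(j-1)" 
            proof -
              have "Suc N - j + (j - 1) = N" using jN by simp
              thus ?thesis by (metis power_add)
            qed
            ultimately show ?thesis using s by (simp add: field_simps)
          qed
          finally have C: "S 1 / s^(j-1) \<le> K * (S 0 / s^j + s^(Suc N - j) * S (Suc N))" .
          have X: "0 \<le> S 0 / s^j + s^(Suc N - j) * S (Suc N)" using nn s by auto
          have "S j \<le> K3 * (K * (S 0 / s^j + s^(Suc N - j) * S (Suc N)) + s^(Suc N - j) * S (Suc N))"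
            using B C K3 by (smt (verit) mult_left_mono)
          also have "\<dots> \<le> K3 * (K * (S 0 / s^j + s^(Suc N - j) * S (Suc N)) + (S 0 / s^j + s^(Suc N - j) * S (Suc N)))"
            using K3 nn s by (intro mult_left_mono) auto
          also have "\<dots> = K3 * (K + 1) * (S 0 / s^j + s^(Suc N - j) * S (Suc N))" by (simp add: algebra_simps add_divide_distrib)
          finally show "S j \<le> K3 * (K + 1) * (S 0 / s^j + s^(Suc N - j) * S (Suc N))" .
        qed
      qed
    qed
  qed
qed


lemma bound0:
  fixes f f' :: "real \<Rightarrow> complex"
  assumes d: "0 < d" and der: "\<And>r. r \<in> {0..<d} \<Longrightarrow> (f has_vector_derivative f' r) (at r within {0..<d})"
    and b: "\<And>r. 0 < r \<Longrightarrow> r < d \<Longrightarrow> norm (f r) \<le> B"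
  shows "norm (f 0) \<le> B"
proof -
  have sub: "{0..d/2} \<subseteq> {0..<d}" using d by auto
  have "(f has_vector_derivative f' 0) (at 0 within {0..d/2})"
    using has_vector_derivative_within_subset[OF der sub] d by auto
  hence "continuous (at 0 within {0..d/2}) f" by (rule has_vector_derivative_continuous)
  hence "(f \<longlongrightarrow> f 0) (at_right 0)" using d by (simp add: continuous_within at_within_Icc_at_right)
  moreover have "eventually (\<lambda>r. norm (f r) \<le> B) (at_right (0::real))"
    using eventually_at_right_real[of 0 d] d by (auto elim!: eventually_mono intro: b)
  ultimately show ?thesis by (intro Lim_norm_ubound[of "at_right 0" f]) auto
qed

lemma choice_le:
  assumes "\<forall>j\<le>N. \<exists>K>0. P j K"
  obtains Kf where "\<And>j. j \<le> N \<Longrightarrow> Kf j > 0 \<and> P j (Kf j)"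
proof -
  have "\<forall>j. \<exists>K. j \<le> N \<longrightarrow> K > 0 \<and> P j K" using assms by auto
  then obtain Kf where "\<forall>j. j \<le> N \<longrightarrow> Kf j > 0 \<and> P j (Kf j)" by metis
  thus ?thesis using that by auto
qed

theorem mainTheorem3:
  fixes F :: "real \<Rightarrow> 'm \<Rightarrow> complex"
    and D :: "nat \<Rightarrow> real \<Rightarrow> 'm \<Rightarrow> complex"
    and \<gamma> :: nat and \<delta> :: real
  assumes gamma: "\<gamma> \<ge> 2"
    and delta: "\<delta> > 0"
    and D0: "\<And>\<rho> \<mu>. D 0 \<rho> \<mu> = F \<rho> \<mu>"
    and smooth: "\<And>k \<mu> \<rho>. \<rho> \<in> {0..<\<delta>} \<Longrightarrow>
        ((\<lambda>r. D k r \<mu>) has_vector_derivative D (Suc k) \<rho> \<mu>) (at \<rho> within {0..<\<delta>})"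
    and F1: "\<And>\<mu>. D 0 0 \<mu> / of_nat (fact 0) = 0 \<and> D 1 0 \<mu> / of_nat (fact 1) = 0"
    and F2: "\<exists>C>0. \<forall>\<mu>. (\<Sum>j=2..\<gamma>. norm (D j 0 \<mu> / of_nat (fact j))) \<ge> C"
    and F3: "\<And>\<mu> \<rho> \<rho>'. 0 < \<rho> \<Longrightarrow> \<rho> \<le> \<rho>' \<Longrightarrow> \<rho>' < \<delta> \<Longrightarrow>
        norm (D 1 \<rho> \<mu>) \<le> norm (D 1 \<rho>' \<mu>)"
    and F4: "\<And>k. \<exists>B. \<forall>\<mu> \<rho>. 0 < \<rho> \<and> \<rho> < \<delta> \<longrightarrow> norm (D k \<rho> \<mu>) \<le> B"
  shows "\<exists>\<delta>'>0. \<delta>' \<le> \<delta> \<and> (\<exists>C>0. \<exists>Cm :: nat \<Rightarrow> real. (\<forall>m. Cm m > 0) \<and>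
           (\<forall>\<rho> \<mu> m. 0 < \<rho> \<and> \<rho> < \<delta>' \<longrightarrow>
              norm (D 1 \<rho> \<mu>) \<ge> C * \<rho> ^ (\<gamma> - 1) \<and>
              norm (D m \<rho> \<mu>) \<le> Cm m * \<rho> powr (1 - real m) * norm (D 1 \<rho> \<mu>)))"
proof -
  obtain Bf where Bf: "\<And>k \<mu> r. 0 \<le> r \<Longrightarrow> r < \<delta> \<Longrightarrow> norm (D k r \<mu>) \<le> Bf k"
  proof -
    have "\<forall>k. \<exists>B. \<forall>\<mu> r. 0 \<le> r \<and> r < \<delta> \<longrightarrow> norm (D k r \<mu>) \<le> B"
    proof
      fix k
      obtain B where B: "\<forall>\<mu> \<rho>. 0 < \<rho> \<and> \<rho> < \<delta> \<longrightarrow> norm (D k \<rho> \<mu>) \<le> B" using F4 by blast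
      have "norm (D k r \<mu>) \<le> B" if "0 \<le> r" "r < \<delta>" for \<mu> r
      proof (cases "r = 0")
        case True
        show ?thesis unfolding True
          by (rule bound0[OF delta, of "\<lambda>r. D k r \<mu>" "\<lambda>r. D (Suc k) r \<mu>"]) (use smooth B in auto)
      next
        case False thus ?thesis using B that by auto
      qed
      thus "\<exists>B. \<forall>\<mu> r. 0 \<le> r \<and> r < \<delta> \<longrightarrow> norm (D k r \<mu>) \<le> B" by blast
    qed
    then obtain Bf where "\<forall>k \<mu> r. 0 \<le> r \<and> r < \<delta> \<longrightarrow> norm (D k r \<mu>) \<le> Bf k" by metis
    thus ?thesis by (intro that) auto
  qed
  have Bf0: "0 \<le> Bf k" for k using Bf[of 0 k undefined] delta norm_ge_zero[of "D k 0 undefined"] by linarith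
  define S where "S \<mu> r j = (SUP x\<in>{0..r}. norm (D j x \<mu>))" for \<mu> r j
  have Sprops: "(\<forall>x\<in>{0..r}. norm (D j x \<mu>) \<le> S \<mu> r j) \<and> S \<mu> r j \<le> Bf j \<and> 0 \<le> S \<mu> r j"
    if r: "0 < r" "r < \<delta>" for \<mu> r j
  proof -
    have bdd: "bdd_above ((\<lambda>x. norm (D j x \<mu>)) ` {0..r})"
      using Bf r by (intro bdd_aboveI[of _ "Bf j"]) auto
    have up: "\<forall>x\<in>{0..r}. norm (D j x \<mu>) \<le> S \<mu> r j"
      unfolding S_def using bdd by (auto intro: cSUP_upper)
    have "S \<mu> r j \<le> Bf j" unfolding S_def using Bf r by (intro cSUP_least) auto
    moreover have "0 \<le> S \<mu> r j" using up[rule_format, of 0] r by (auto intro: order_trans[OF norm_ge_zero])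
    ultimately show ?thesis using up by auto
  qed
  have hyp: "hypI 2 (r/2) (S \<mu> r)" if r: "0 < r" "r < \<delta>" for \<mu> r
    unfolding hypI_def
  proof (intro conjI allI impI)
    fix j :: nat show "0 \<le> S \<mu> r j" using Sprops[OF r] by auto
  next
    fix j :: nat and s :: real assume j: "1 \<le> j" and s: "0 < s" "s \<le> r/2"
    have sub: "{0..r} \<subseteq> {0..<\<delta>}" using r by auto
    have dd: "\<And>k x. x\<in>{0..r} \<Longrightarrow> ((\<lambda>x. D k x \<mu>) has_vector_derivative D (Suc k) x \<mu>) (at x within {0..r})"
      using has_vector_derivative_within_subset[OF smooth sub] sub by blast
    have "norm (D j x \<mu>) \<le> 2 * S \<mu> r (j-1) / s + s * S \<mu> r (Suc j)" if x: "x \<in> {0..r}" for x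
    proof -
      have e: "Suc (j-1) = j" using j by simp
      show ?thesis
        apply (rule step2[of s r "\<lambda>x. D (j-1) x \<mu>" "\<lambda>x. D j x \<mu>" "\<lambda>x. D (Suc j) x \<mu>"])
        using s dd[of _ "j-1", unfolded e] dd[of _ j] Sprops[OF r] x by auto
    qed
    hence "S \<mu> r j \<le> 2 * S \<mu> r (j-1) / s + s * S \<mu> r (Suc j)"
      unfolding S_def[of \<mu> r j] using r by (intro cSUP_least) auto
    moreover have "0 \<le> s * S \<mu> r (Suc j)" using Sprops[OF r, of "Suc j" \<mu>] s by simp
    ultimately show "S \<mu> r j \<le> 2 * (S \<mu> r (j - 1) / s + s * S \<mu> r (Suc j))"
      by (simp add: distrib_left)
  qed
  have S1: "S \<mu> r 1 = norm (D 1 r \<mu>)" if r: "0 < r" "r < \<delta>" for \<mu> r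
  proof -
    have "S \<mu> r 1 \<le> norm (D 1 r \<mu>)" unfolding S_def
    proof (intro cSUP_least)
      fix x assume x: "x \<in> {0..r}"
      show "norm (D 1 x \<mu>) \<le> norm (D 1 r \<mu>)"
      proof (cases "x = 0")
        case True thus ?thesis using F1[of \<mu>] by simp
      next
        case False thus ?thesis using F3[of x r \<mu>] x r by auto
      qed
    qed (use r in auto)
    moreover have "norm (D 1 r \<mu>) \<le> S \<mu> r 1" using Sprops[OF r, of 1 \<mu>] r by auto
    ultimately show ?thesis by linarith
  qed
  obtain KA where KA: "\<And>j. j \<le> \<gamma>-1 \<Longrightarrow> KA j > 0 \<and> (\<forall>S L s. hypI 2 L S \<longrightarrow> 0 < s \<longrightarrow> s \<le> L \<longrightarrow>
            S j \<le> KA j * (S 0 / s^j + s^(\<gamma>-1-j) * S (\<gamma>-1)))"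
    using choice_le[OF interp[of 2 "\<gamma>-1"]] by auto
  obtain KB where KB: "\<And>j. j \<le> \<gamma> \<Longrightarrow> KB j > 0 \<and> (\<forall>S L s. hypI 2 L S \<longrightarrow> 0 < s \<longrightarrow> s \<le> L \<longrightarrow>
            S j \<le> KB j * (S 0 / s^j + s^(\<gamma>-j) * S \<gamma>))"
    using choice_le[OF interp[of 2 "\<gamma>"]] by auto
  obtain C0 where C0: "C0 > 0" "\<And>\<mu>. (\<Sum>j=2..\<gamma>. norm (D j 0 \<mu> / of_nat (fact j))) \<ge> C0"
    using F2 by auto
  define Ktot where "Ktot = (\<Sum>j=2..\<gamma>. KB (j-1))"
  have Ktot: "Ktot > 0" unfolding Ktot_def using gamma KB by (intro sum_pos) auto
  define Bg where "Bg = Bf (Suc \<gamma>)"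
  define \<delta>' where "\<delta>' = min \<delta> (min 1 (C0 / (2 * Ktot * (Bg + 1))))"
  have Bg0: "0 \<le> Bg" using Bf0 by (simp add: Bg_def)
  have d': "0 < \<delta>'" "\<delta>' \<le> \<delta>" "\<delta>' \<le> 1" "\<delta>' \<le> C0 / (2 * Ktot * (Bg + 1))"
    using delta C0 Ktot Bg0 by (auto simp: \<delta>'_def)
  define Clow where "Clow = C0 / (2 * Ktot * 2^\<gamma>)"
  have Clow: "Clow > 0" using C0 Ktot by (simp add: Clow_def)
  have lower: "norm (D 1 r \<mu>) \<ge> Clow * r ^ (\<gamma> - 1)" if r: "0 < r" "r < \<delta>'" for r \<mu>
  proof -
    have rd: "0 < r" "r < \<delta>" "r \<le> 1" using r d' by auto
    define T where "T = (\<lambda>i. S \<mu> r (Suc i))"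
    have hT: "hypI 2 (r/2) T" unfolding T_def by (rule hypI_shift[OF hyp[OF rd(1,2)]])
    define g where "g = norm (D 1 r \<mu>)"
    have T0: "T 0 = g" using S1[OF rd(1,2)] by (simp add: T_def g_def)
    have Tg: "T \<gamma> \<le> Bg" "0 \<le> T \<gamma>" using Sprops[OF rd(1,2), of "Suc \<gamma>" \<mu>] by (auto simp: T_def Bg_def)
    have g0: "0 \<le> g" by (simp add: g_def)
    define X where "X = g * 2^\<gamma> / r^(\<gamma>-1)"
    have tm: "norm (D j 0 \<mu> / of_nat (fact j)) \<le> KB (j-1) * (X + r * Bg)" if j: "j \<in> {2..\<gamma>}" for j
    proof -
      define k where "k = j - 1"
      have k: "1 \<le> k" "k \<le> \<gamma> - 1" "k \<le> \<gamma>" "Suc k = j" using j by (auto simp: k_def)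
      have "norm (D j 0 \<mu> / of_nat (fact j)) \<le> norm (D j 0 \<mu>)"
      proof -
        have f1: "1 \<le> (fact j :: real)" by (rule fact_ge_1)
        have "norm (D j 0 \<mu>) / fact j \<le> norm (D j 0 \<mu>) / 1"
          using f1 by (intro divide_left_mono) auto
        thus ?thesis by (simp add: norm_divide)
      qed
      also have "\<dots> \<le> T k" using Sprops[OF rd(1,2), of j \<mu>] k rd by (auto simp: T_def)
      also have "\<dots> \<le> KB k * (T 0 / (r/2)^k + (r/2)^(\<gamma>-k) * T \<gamma>)"
        using KB[OF k(3)] hT rd by auto
      also have "\<dots> \<le> KB k * (X + r * Bg)"
      proof (intro mult_left_mono add_mono)
        show "0 \<le> KB k" using KB[OF k(3)] by auto
        have "T 0 / (r/2)^k = g * 2^k / r^k" by (simp add: T0 power_divide)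
        also have "\<dots> \<le> g * 2^\<gamma> / r^k"
          using g0 rd k by (intro divide_right_mono mult_left_mono power_increasing) auto
        also have "\<dots> \<le> g * 2^\<gamma> / r^(\<gamma>-1)"
          using g0 rd k by (intro divide_left_mono power_decreasing mult_nonneg_nonneg mult_pos_pos zero_less_power) auto
        finally show "T 0 / (r/2)^k \<le> X" by (simp add: X_def)
        have "(r/2)^(\<gamma>-k) \<le> (r/2)^1"
          using rd k by (intro power_decreasing) auto
        also have "\<dots> \<le> r" using rd by auto
        finally have "(r/2)^(\<gamma>-k) \<le> r" .
        thus "(r/2)^(\<gamma>-k) * T \<gamma> \<le> r * Bg"
          using Tg rd by (intro mult_mono) auto
      qed
      finally show ?thesis by (simp add: k_def)
    qed
    have "C0 \<le> (\<Sum>j=2..\<gamma>. norm (D j 0 \<mu> / of_nat (fact j)))" using C0 by auto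
    also have "\<dots> \<le> (\<Sum>j=2..\<gamma>. KB (j-1) * (X + r * Bg))" by (intro sum_mono tm)
    also have "\<dots> = Ktot * X + Ktot * r * Bg" by (simp add: Ktot_def sum.distrib sum_distrib_left sum_distrib_right algebra_simps)
    finally have C0X: "C0 \<le> Ktot * X + Ktot * r * Bg" .
    have "Ktot * r * Bg \<le> Ktot * \<delta>' * Bg" using Ktot Bg0 r by (intro mult_right_mono mult_left_mono) auto
    also have "\<dots> \<le> Ktot * (C0 / (2 * Ktot * (Bg + 1))) * Bg"
      using Ktot Bg0 d' by (intro mult_right_mono mult_left_mono) auto
    also have "\<dots> = C0 / 2 * (Bg / (Bg + 1))"
    proof -
      have e: "Ktot * (C0 / (2 * Ktot * (Bg + 1))) = C0 / (2 * (Bg + 1))" using Ktot by simp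
      show ?thesis unfolding e by simp
    qed
    also have "\<dots> \<le> C0 / 2 * 1" using C0 Bg0 by (intro mult_left_mono) auto
    finally have "Ktot * r * Bg \<le> C0 / 2" by simp
    with C0X have "C0 / 2 \<le> Ktot * X" by linarith
    hence "C0 / (2 * Ktot) \<le> X" using Ktot by (simp add: field_simps)
    hence "C0 / (2 * Ktot) \<le> g * 2^\<gamma> / r^(\<gamma>-1)" by (simp add: X_def)
    hence "C0 / (2 * Ktot) * r^(\<gamma>-1) \<le> g * 2^\<gamma>" using rd by (simp add: field_simps)
    hence "C0 / (2 * Ktot) * r^(\<gamma>-1) / 2^\<gamma> \<le> g * 2^\<gamma> / 2^\<gamma>"
      by (intro divide_right_mono) auto
    hence "C0 / (2 * Ktot) * r^(\<gamma>-1) / 2^\<gamma> \<le> g" by simp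
    moreover have "Clow * r^(\<gamma>-1) = C0 / (2 * Ktot) * r^(\<gamma>-1) / 2^\<gamma>"
      using Ktot by (simp add: Clow_def field_simps)
    ultimately show ?thesis by (simp add: g_def)
  qed
  have pw: "r powr (1 - real m) = 1 / r^(m-1)" if "0 < r" "1 \<le> m" for r :: real and m
  proof -
    have "1 - real m = - real (m - 1)" using that by (simp add: of_nat_diff)
    hence "r powr (1 - real m) = r powr (- real (m - 1))" by (rule arg_cong)
    also have "\<dots> = inverse (r powr real (m - 1))" by (rule powr_minus)
    also have "\<dots> = inverse (r ^ (m - 1))" using powr_realpow[OF that(1), of "m-1"] by (simp only:)
    finally show ?thesis by (simp add: divide_inverse)
  qed
  define Cm where "Cm m = (if m \<le> 1 then 1 else if m \<le> \<gamma> then KA (m-1) * (2^(m-1) + Bf \<gamma> / Clow)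
      else Bf m / Clow + 1)" for m
  have Cmpos: "Cm m > 0" for m
  proof -
    have "KA (m-1) * (2^(m-1) + Bf \<gamma> / Clow) > 0" if "m \<le> \<gamma>"
      using KA[of "m-1"] that Bf0[of \<gamma>] Clow gamma
      by (intro mult_pos_pos add_pos_nonneg) auto
    moreover have "Bf m / Clow + 1 > 0" using Bf0[of m] Clow by (simp add: add_nonneg_pos)
    ultimately show ?thesis by (auto simp: Cm_def)
  qed
  have main: "norm (D m r \<mu>) \<le> Cm m * r powr (1 - real m) * norm (D 1 r \<mu>)"
    if r: "0 < r" "r < \<delta>'" for r \<mu> m
  proof -
    have rd: "0 < r" "r < \<delta>" "r \<le> 1" using r d' by auto
    define g where "g = norm (D 1 r \<mu>)"
    have g0: "0 \<le> g" by (simp add: g_def)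
    have low: "Clow * r ^ (\<gamma> - 1) \<le> g" unfolding g_def by (rule lower[OF r])
    show "norm (D m r \<mu>) \<le> Cm m * r powr (1 - real m) * norm (D 1 r \<mu>)"
    proof -
      consider "m = 0" | "m = 1" | "2 \<le> m" "m \<le> \<gamma>" | "\<gamma> < m" by linarith
      thus ?thesis
      proof cases
        case 1
        have sub: "{0..r} \<subseteq> {0..<\<delta>}" using rd by auto
        have "norm (D 0 r \<mu> - D 0 0 \<mu>) \<le> g * \<bar>r - 0\<bar>"
        proof (rule mvt_c[of "{0..r}" "\<lambda>x. D 0 x \<mu>" "\<lambda>x. D 1 x \<mu>"])
          show "((\<lambda>x. D 0 x \<mu>) has_vector_derivative D 1 x \<mu>) (at x within {0..r})" if "x \<in> {0..r}" for x
            using has_vector_derivative_within_subset[OF smooth[of x 0 \<mu>] sub] that sub by auto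
          show "norm (D 1 x \<mu>) \<le> g" if "x \<in> {0..r}" for x
            using Sprops[OF rd(1,2), of 1 \<mu>] S1[OF rd(1,2), of \<mu>] that by (auto simp: g_def)
        qed (use rd in auto)
        moreover have "D 0 0 \<mu> = 0" using F1[of \<mu>] by simp
        ultimately have "norm (D 0 r \<mu>) \<le> g * r" using rd by simp
        thus ?thesis using 1 rd by (simp add: Cm_def g_def mult.commute)
      next
        case 2
        thus ?thesis using rd by (simp add: Cm_def)
      next
        case 3
        define k where "k = m - 1"
        have k: "1 \<le> k" "k \<le> \<gamma> - 1" "Suc k = m" using 3 by (auto simp: k_def)
        define T where "T = (\<lambda>i. S \<mu> r (Suc i))"
        have hT: "hypI 2 (r/2) T" unfolding T_def by (rule hypI_shift[OF hyp[OF rd(1,2)]])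
        have T0: "T 0 = g" using S1[OF rd(1,2)] by (simp add: T_def g_def)
        have TG: "T (\<gamma>-1) \<le> Bf \<gamma>" "0 \<le> T (\<gamma>-1)"
          using Sprops[OF rd(1,2), of \<gamma> \<mu>] gamma by (auto simp: T_def)
        have rk: "0 < r^k" using rd by simp
        have "norm (D m r \<mu>) \<le> T k" using Sprops[OF rd(1,2), of m \<mu>] k rd by (auto simp: T_def)
        also have "\<dots> \<le> KA k * (T 0 / (r/2)^k + (r/2)^(\<gamma>-1-k) * T (\<gamma>-1))"
          using KA[OF k(2)] hT rd by auto
        also have "\<dots> \<le> KA k * (2^k * g / r^k + Bf \<gamma> / Clow * g / r^k)"
        proof (intro mult_left_mono add_mono)
          show "0 \<le> KA k" using KA[OF k(2)] by auto
          show "T 0 / (r/2)^k \<le> 2^k * g / r^k" by (simp add: T0 power_divide mult.commute)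
          have "(r/2)^(\<gamma>-1-k) \<le> r^(\<gamma>-1-k)" using rd by (intro power_mono) auto
          also have "r^(\<gamma>-1-k) = r^(\<gamma>-1) / r^k"
          proof -
            have e: "\<gamma>-1 = (\<gamma>-1-k) + k" using k by simp
            have "r^(\<gamma>-1) = r^(\<gamma>-1-k) * r^k" by (subst e) (rule power_add)
            thus ?thesis using rk rd by simp
          qed
          also have "\<dots> \<le> (g / Clow) / r^k"
            using low Clow rk by (intro divide_right_mono) (auto simp: field_simps)
          finally have A: "(r/2)^(\<gamma>-1-k) \<le> (g / Clow) / r^k" .
          have "(r/2)^(\<gamma>-1-k) * T (\<gamma>-1) \<le> (g / Clow) / r^k * Bf \<gamma>"
            using A TG rd g0 Clow rk by (intro mult_mono) auto
          thus "(r/2)^(\<gamma>-1-k) * T (\<gamma>-1) \<le> Bf \<gamma> / Clow * g / r^k" by (simp add: field_simps)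
        qed
        also have "\<dots> = KA k * (2^k + Bf \<gamma> / Clow) * (1 / r^k) * g"
        proof -
          have "Clow \<noteq> 0" "r \<noteq> 0" using Clow rd by auto
          thus ?thesis by (simp add: field_simps)
        qed
        also have "\<dots> = Cm m * r powr (1 - real m) * g"
          using 3 k rd by (simp add: Cm_def pw k_def)
        finally show ?thesis by (simp add: g_def)
      next
        case 4
        have m1: "1 \<le> m" "\<not> m \<le> 1" "\<not> m \<le> \<gamma>" using 4 gamma by auto
        have rk: "0 < r^(m-1)" using rd by simp
        have "Clow * r^(m-1) \<le> Clow * r^(\<gamma>-1)"
          using Clow rd 4 by (intro mult_left_mono power_decreasing) auto
        also have "\<dots> \<le> g" by (rule low)
        finally have "Clow * r^(m-1) \<le> g" .
        hence Cg: "Clow \<le> g / r^(m-1)" using rk by (simp add: field_simps)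
        have "norm (D m r \<mu>) \<le> Bf m" using Bf rd by auto
        also have "\<dots> = Bf m / Clow * Clow" using Clow by simp
        also have "\<dots> \<le> Bf m / Clow * (g / r^(m-1))"
          using Cg Bf0[of m] Clow by (intro mult_left_mono) auto
        also have "\<dots> \<le> (Bf m / Clow + 1) * (g / r^(m-1))"
          using g0 rk by (intro mult_right_mono) auto
        also have "\<dots> = Cm m * r powr (1 - real m) * g"
          using m1 rd by (simp add: Cm_def pw)
        finally show ?thesis by (simp add: g_def)
      qed
    qed
  qed
  show ?thesis
    apply (rule exI[of _ \<delta>'])
    apply (intro conjI exI[of _ Clow] exI[of _ Cm])
    using d' Clow Cmpos lower main by auto
qed

end
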